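(* Let $\mu$ be a probability measure on $\mathbb{R}^d$ absolutely continuous with respect to Lebesgue measure and $n\ge1$. The function \[ F(\mathbb{R}^d,n)\times\mathcal{K}^d\longrightarrow(\mathcal{K}^d)^{\times n},\qquad (x,K)\longmapsto K(x)=\big(K\cap C_1(x,w_K(x)),\dots,K\cap C_n(x,w_K(x))\big), \] is continuous and $S_n$-equivariant (with $S_n$ acting trivially on $\mathcal{K}^d$ in the domain and by permuting coordinates on $(\mathcal{K}^d)^{\times n}$), and for each $K\in\mathcal{K}^d$ it restricts to a map $F(\mathbb{R}^d,n)\times\{K\}\to\mathrm{EMP}_\mu(K,n)$.
   Context: $\mathcal{K}^d$ is the set of compact convex subsets of $\mathbb{R}^d$ with nonempty interior, with the Hausdorff metric; $(\mathcal{K}^d)^{\times n}$ carries the product metric. $F(\mathbb{R}^d,n)$ is the space of $n$-tuples of pairwise distinct points, $W_n=\{w\in\mathbb{R}^n:\sum w_i=0\}$; $S_n$ acts by $\sigma\cdot(x_1,\dots,x_n)=(x_{\sigma^{-1}(1)},\dots,x_{\sigma^{-1}(n)})$. $C_i(x,w)=\{p\in\mathbb{R}^d:\|p-x_i\|^2-w_i\le\|p-x_j\|^2-w_j\ \forall j\}$. Standing fact (from the literature): for every $K\in\mathcal{K}^d$ and $x\in F(\mathbb{R}^d,n)$ there are unique weights $w_K(x)\in W_n$ such that the sets $K\cap C_i(x,w_K(x))$ are convex bodies with equal $\mu$-measure. $\mathrm{EMP}_\mu(K,n)$ is the set of $(K_1,\dots,K_n)\in(\mathcal{K}^d)^{\times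 n}$ with $K=\bigcup K_i$, pairwise disjoint interiors, and $\mu(K_1)=\dots=\mu(K_n)$. *)

theory Defs
  imports "HOL-Analysis.Analysis" "HOL-Probability.Probability" "HOL-Combinatorics.Permutations"
begin

definition convex_body :: "'a::euclidean_space set \<Rightarrow> bool" where
  "convex_body K \<longleftrightarrow> compact K \<and> convex K \<and> interior K \<noteq> {}"

text \<open>Hausdorff distance (used only on nonempty compact sets).\<close>
definition hausdist :: "'a::metric_space set \<Rightarrow> 'a set \<Rightarrow> real" where
  "hausdist A B = max (SUP a\<in>A. infdist a B) (SUP b\<in>B. infdist b A)"

text \<open>n-tuples are functions on indices 0..n-1. Configuration space F(R^d,n).\<close>
definition conf_space :: "nat \<Rightarrow> (nat \<Rightarrow> 'a) set" where
  "conf_space n = {x. \<forall>i<n. \<forall>j<n. i \<noteq> j \<longrightarrow> x i \<noteq> x j}"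

definition weight_space :: "nat \<Rightarrow> (nat \<Rightarrow> real) set" where
  "weight_space n = {w. (\<forall>i\<ge>n. w i = 0) \<and> (\<Sum>i<n. w i) = 0}"

definition power_cell :: "nat \<Rightarrow> (nat \<Rightarrow> 'a::euclidean_space) \<Rightarrow> (nat \<Rightarrow> real) \<Rightarrow> nat \<Rightarrow> 'a set" where
  "power_cell n x w i = {p. \<forall>j<n. (norm (p - x i))\<^sup>2 - w i \<le> (norm (p - x j))\<^sup>2 - w j}"

definition equipart_weights ::
  "'a::euclidean_space measure \<Rightarrow> nat \<Rightarrow> 'a set \<Rightarrow> (nat \<Rightarrow> 'a) \<Rightarrow> (nat \<Rightarrow> real) \<Rightarrow> bool" where
  "equipart_weights \<mu> n K x w \<longleftrightarrow> w \<in> weight_space n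
     \<and> (\<forall>i<n. convex_body (K \<inter> power_cell n x w i))
     \<and> (\<forall>i<n. \<forall>j<n. measure \<mu> (K \<inter> power_cell n x w i) = measure \<mu> (K \<inter> power_cell n x w j))"

definition eq_weights :: "'a::euclidean_space measure \<Rightarrow> nat \<Rightarrow> 'a set \<Rightarrow> (nat \<Rightarrow> 'a) \<Rightarrow> nat \<Rightarrow> real" where
  "eq_weights \<mu> n K x = (THE w. equipart_weights \<mu> n K x w)"

definition eq_cells :: "'a::euclidean_space measure \<Rightarrow> nat \<Rightarrow> (nat \<Rightarrow> 'a) \<Rightarrow> 'a set \<Rightarrow> nat \<Rightarrow> 'a set" where
  "eq_cells \<mu> n x K i = K \<inter> power_cell n x (eq_weights \<mu> n K x) i"

definition EMP :: "'a::euclidean_space measure \<Rightarrow> 'a set \<Rightarrow> nat \<Rightarrow> (nat \<Rightarrow> 'a set) set" where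
  "EMP \<mu> K n = {Ks. (\<forall>i<n. convex_body (Ks i)) \<and> K = (\<Union>i<n. Ks i)
     \<and> (\<forall>i<n. \<forall>j<n. i \<noteq> j \<longrightarrow> interior (Ks i) \<inter> interior (Ks j) = {})
     \<and> (\<forall>i<n. \<forall>j<n. measure \<mu> (Ks i) = measure \<mu> (Ks j))}"

definition perm_act :: "(nat \<Rightarrow> nat) \<Rightarrow> (nat \<Rightarrow> 'b) \<Rightarrow> nat \<Rightarrow> 'b" where
  "perm_act \<sigma> x = (\<lambda>i. x (inv \<sigma> i))"

end

theory Submission
  imports Defs
begin

definition gf :: "(nat \<Rightarrow> 'a::euclidean_space) \<Rightarrow> (nat \<Rightarrow> real) \<Rightarrow> nat \<Rightarrow> nat \<Rightarrow> 'a \<Rightarrow> real" where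
  "gf x w i j p = (norm (p - x i))\<^sup>2 - w i - ((norm (p - x j))\<^sup>2 - w j)"

lemma power_cell_gf: "power_cell n x w i = {p. \<forall>j<n. gf x w i j p \<le> 0}"
  unfolding power_cell_def gf_def by auto

lemma gf_affine: "gf x w i j p = 2 * inner p (x j - x i) + (norm (x i))\<^sup>2 - (norm (x j))\<^sup>2 - w i + w j"
  unfolding gf_def by (simp add: power2_norm_eq_inner inner_diff_left inner_diff_right inner_commute algebra_simps)

lemma gf_comb: "gf x w i j ((1-t) *\<^sub>R a + t *\<^sub>R c) = (1-t) * gf x w i j a + t * gf x w i j c"
  unfolding gf_affine by (simp add: inner_add_left algebra_simps)

lemma gf_ii[simp]: "gf x w i i p = 0"
  unfolding gf_def by simp

lemma gf_swap: "gf x w j i p = - gf x w i j p"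
  unfolding gf_def by simp

lemma gf_lip: "\<bar>gf x w i j p - gf x w i j q\<bar> \<le> 2 * norm (x j - x i) * norm (p - q)"
proof -
  have "gf x w i j p - gf x w i j q = 2 * inner (p - q) (x j - x i)"
    unfolding gf_affine by (simp add: inner_diff_left algebra_simps)
  also have "\<bar>\<dots>\<bar> \<le> 2 * (norm (p - q) * norm (x j - x i))"
    using Cauchy_Schwarz_ineq2[of "p-q" "x j - x i"] by (simp add: abs_mult)
  finally show ?thesis by (simp add: algebra_simps)
qed

lemma gf_wchange: "gf x v i j p = gf x w i j p - (v i - w i) + (v j - w j)"
  unfolding gf_def by simp

lemma continuous_on_gf[continuous_intros]: "continuous_on S (gf x w i j)"
  unfolding gf_def by (intro continuous_intros)

lemma convex_power_cell: "convex (power_cell n x (w::nat\<Rightarrow>real) (i::nat) :: 'a::euclidean_space set)"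
proof -
  have eq: "power_cell n x w i = (\<Inter>j\<in>{..<n}. {p. 2 * (p \<bullet> (x j - x i)) \<le> (norm (x j))\<^sup>2 - (norm (x i))\<^sup>2 + w i - w j})"
    unfolding power_cell_gf gf_affine by (auto simp: algebra_simps)
  have h: "convex {p::'a. 2 * (p \<bullet> d) \<le> c}" for d c
    using convex_halfspace_le[of "2 *\<^sub>R d" c] by (simp add: inner_commute)
  show ?thesis unfolding eq by (rule convex_INT) (rule h)
qed

lemma closed_power_cell: "closed (power_cell n x w i)"
proof -
  have "power_cell n x w i = (\<Inter>j\<in>{..<n}. {p. gf x w i j p \<le> 0})"
    unfolding power_cell_gf by auto
  then show ?thesis by (auto intro!: closed_INT closed_Collect_le continuous_intros)
qed

lemma infdist_lt_ex:
  assumes "A \<noteq> {}" "infdist q A < d" shows "\<exists>a\<in>A. dist q a < d"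
  using assms by (simp add: infdist_notempty cINF_less_iff)

lemma bounded_infdist_bdd:
  assumes "bounded A" "B \<noteq> {}" shows "bdd_above ((\<lambda>a. infdist a B) ` A)"
proof -
  obtain b where b: "b \<in> B" using assms by auto
  obtain c r where cr: "\<forall>a\<in>A. dist c a \<le> r" using assms(1) unfolding bounded_def by auto
  have "infdist a B \<le> r + dist c b" if "a \<in> A" for a
  proof -
    have "infdist a B \<le> dist a b" by (rule infdist_le[OF b])
    also have "\<dots> \<le> dist a c + dist c b" by (rule dist_triangle)
    also have "\<dots> \<le> r + dist c b" using cr that by (simp add: dist_commute)
    finally show ?thesis .
  qed
  then show ?thesis by (auto intro!: bdd_aboveI)
qed

lemma hd_ge1:
  assumes "bounded A" "B \<noteq> {}" "a \<in> A" shows "infdist a B \<le> hausdist A B"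
  unfolding hausdist_def using cSUP_upper[OF assms(3) bounded_infdist_bdd[OF assms(1,2)]]
  by (simp add: le_max_iff_disj)

lemma hd_ge2:
  assumes "bounded B" "A \<noteq> {}" "b \<in> B" shows "infdist b A \<le> hausdist A B"
  unfolding hausdist_def using cSUP_upper[OF assms(3) bounded_infdist_bdd[OF assms(1,2)]]
  by (simp add: le_max_iff_disj)

lemma hd_le:
  assumes "A \<noteq> {}" "B \<noteq> {}" "\<And>a. a \<in> A \<Longrightarrow> infdist a B \<le> e" "\<And>b. b \<in> B \<Longrightarrow> infdist b A \<le> e"
  shows "hausdist A B \<le> e"
  unfolding hausdist_def using assms by (auto intro!: cSUP_least)

lemma hd_close2:
  assumes "bounded L" "K \<noteq> {}" "q \<in> L" "hausdist K L < d" shows "\<exists>k\<in>K. dist q k < d"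
  using hd_ge2[OF assms(1,2,3)] assms(4) infdist_lt_ex[OF assms(2)] by fastforce

lemma hd_sep:
  fixes p :: "'a::euclidean_space"
  assumes "convex L" "closed L" "L \<noteq> {}" "bounded K" "0 < r" "ball p r \<subseteq> K" "hausdist K L < r"
  shows "p \<in> L"
proof (rule ccontr)
  assume pL: "p \<notin> L"
  obtain a b where ab: "inner a p < b" "\<forall>x\<in>L. b < inner a x"
    using separating_hyperplane_closed_point[OF assms(1,2) pL] by auto
  have a0: "a \<noteq> 0" using ab assms(3) by auto
  have pK: "p \<in> K" using assms(5,6) by auto
  have h0: "0 \<le> hausdist K L"
    using hd_ge1[OF assms(4,3) pK] infdist_nonneg[of p L] by linarith
  define s where "s = (hausdist K L + r) / 2"
  have s: "hausdist K L < s" "s < r" "0 < s" using assms(7) h0 unfolding s_def by auto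
  define q where "q = p - (s / norm a) *\<^sub>R a"
  have "dist p q = s" using a0 s unfolding q_def by (simp add: dist_norm)
  then have qK: "q \<in> K" using s assms(6) by auto
  have aq: "inner a q = inner a p - s * norm a"
    unfolding q_def using a0 by (simp add: inner_diff_right power2_norm_eq_inner[symmetric] power2_eq_square)
  have "s \<le> dist q x" if "x \<in> L" for x
  proof -
    have "b < inner a x" using ab(2) that by auto
    moreover have "inner a (x - q) = inner a x - inner a p + s * norm a" by (simp add: inner_diff_right aq)
    ultimately have "s * norm a < inner a (x - q)" using ab(1) by linarith
    also have "\<dots> \<le> norm a * norm (x - q)" using Cauchy_Schwarz_ineq2[of a "x - q"] by simp
    finally have "s < norm (x - q)" using a0 by (simp add: mult.commute)
    then show ?thesis by (simp add: dist_norm norm_minus_commute)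
  qed
  then have "s \<le> infdist q L" using assms(3) by (simp add: infdist_notempty cINF_greatest)
  moreover have "infdist q L \<le> hausdist K L" by (rule hd_ge1[OF assms(4,3) qK])
  ultimately show False using s by linarith
qed

lemma int_strict:
  assumes "p \<in> interior (K \<inter> power_cell n x w i)" "j < n" "x j \<noteq> x i"
  shows "gf x w i j p < 0"
proof (rule ccontr)
  assume "\<not> gf x w i j p < 0"
  then have g0: "0 \<le> gf x w i j p" by simp
  obtain e where e: "0 < e" "ball p e \<subseteq> K \<inter> power_cell n x w i"
    using assms(1) by (meson mem_interior)
  define d where "d = x j - x i"
  have d0: "0 < norm d" using assms(3) unfolding d_def by simp
  define q where "q = p + (e / (2 * norm d)) *\<^sub>R d"
  have "dist p q = e / 2" using d0 e(1) unfolding q_def by (simp add: dist_norm)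
  then have "q \<in> power_cell n x w i" using e by auto
  then have "gf x w i j q \<le> 0" using assms(2) unfolding power_cell_gf by auto
  moreover have "gf x w i j q = gf x w i j p + 2 * (e / (2 * norm d)) * (norm d)\<^sup>2"
    unfolding gf_affine q_def d_def by (simp add: inner_add_left power2_norm_eq_inner algebra_simps)
  moreover have "0 < 2 * (e / (2 * norm d)) * (norm d)\<^sup>2" using e d0 by simp
  ultimately show False using g0 by linarith
qed

lemma int_cell:
  assumes "p \<in> interior K" "\<And>j. j < n \<Longrightarrow> j \<noteq> i \<Longrightarrow> gf x w i j p < 0"
  shows "p \<in> interior (K \<inter> power_cell n x w i)"
proof -
  define U where "U = interior K \<inter> (\<Inter>j\<in>{j. j < n \<and> j \<noteq> i}. {q. gf x w i j q < 0})"
  have "open U" unfolding U_def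
    by (intro open_Int open_interior open_INT) (auto intro!: open_Collect_less continuous_intros)
  moreover have "p \<in> U" using assms unfolding U_def by auto
  moreover have "U \<subseteq> K \<inter> power_cell n x w i"
    unfolding U_def power_cell_gf using interior_subset
    by (auto, metis gf_ii order_refl less_imp_le)
  ultimately show ?thesis by (meson interior_maximal interiorI)
qed

lemma cells_cover:
  assumes "1 \<le> n" shows "K = (\<Union>i<n. K \<inter> power_cell n x w i)"
proof -
  have "p \<in> (\<Union>i<n. power_cell n x w i)" for p
  proof -
    define f where "f i = (norm (p - x i))\<^sup>2 - w i" for i
    have "0 \<in> {..<n}" using assms by auto
    then have fin: "finite (f ` {..<n})" "f ` {..<n} \<noteq> {}" by auto
    obtain i where i: "i < n" "f i = Min (f ` {..<n})" using Min_in[OF fin] by auto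
    have "f i \<le> f j" if "j < n" for j using i that fin by auto
    then have "\<forall>j<n. f i \<le> f j" by auto
    then have "p \<in> power_cell n x w i" unfolding power_cell_def f_def by auto
    then show ?thesis using i(1) by auto
  qed
  then show ?thesis by auto
qed

lemma cells_disj:
  assumes "x \<in> conf_space n" "i < n" "j < n" "i \<noteq> j"
  shows "interior (K \<inter> power_cell n x w i) \<inter> interior (K \<inter> power_cell n x w j) = {}"
proof -
  have "x j \<noteq> x i" "x i \<noteq> x j" using assms unfolding conf_space_def by auto
  then show ?thesis using int_strict[of _ K n x w i j] int_strict[of _ K n x w j i] assms gf_swap[of x w j i]
    by fastforce
qed

lemma subseq_conv:
  fixes f :: "nat \<Rightarrow> nat \<Rightarrow> real"
  assumes "\<And>k i. i < m \<Longrightarrow> \<bar>f k i\<bar> \<le> M"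
  shows "\<exists>r l. strict_mono r \<and> (\<forall>i<m. (\<lambda>k. f (r k) i) \<longlonglongrightarrow> l i)"
  using assms
proof (induction m)
  case 0
  then show ?case by (rule_tac x=id in exI) (auto simp: strict_mono_def)
next
  case (Suc m)
  then obtain r l where rl: "strict_mono r" "\<forall>i<m. (\<lambda>k. f (r k) i) \<longlonglongrightarrow> l i" by auto
  have "bounded (range (\<lambda>k. f (r k) m))"
    using Suc.prems[of m] unfolding bounded_iff by (auto intro!: exI[of _ M])
  then obtain l' r' where l': "strict_mono r'" "((\<lambda>k. f (r k) m) \<circ> r') \<longlonglongrightarrow> l'"
    using bounded_imp_convergent_subsequence by blast
  have "strict_mono (r \<circ> r')" using rl(1) l'(1) by (simp add: strict_mono_o)
  moreover have "\<forall>i<Suc m. (\<lambda>k. f ((r \<circ> r') k) i) \<longlonglongrightarrow> (l(m := l')) i"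
  proof (intro allI impI)
    fix i assume "i < Suc m"
    then consider "i < m" | "i = m" by linarith
    then show "(\<lambda>k. f ((r \<circ> r') k) i) \<longlonglongrightarrow> (l(m := l')) i"
    proof cases
      case 1
      then show ?thesis using LIMSEQ_subseq_LIMSEQ[OF rl(2)[rule_format, OF 1] l'(1)] by (simp add: o_def)
    next
      case 2
      then show ?thesis using l'(2) by (simp add: o_def)
    qed
  qed
  ultimately show ?case by blast
qed

lemma ind_conv:
  fixes K :: "'a::euclidean_space set"
  assumes x: "x \<in> conf_space n" and K: "convex_body K" and i: "i < n"
    and Y: "\<And>j. j < n \<Longrightarrow> (\<lambda>k. Y k j) \<longlonglongrightarrow> x j"
    and V: "\<And>j. j < n \<Longrightarrow> (\<lambda>k. V k j) \<longlonglongrightarrow> v j"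
    and L: "\<And>k. convex_body (L k)"
    and H: "(\<lambda>k. hausdist K (L k)) \<longlonglongrightarrow> 0"
    and pf: "p \<notin> frontier K"
    and ph: "\<And>j. j < n \<Longrightarrow> j \<noteq> i \<Longrightarrow> gf x v i j p \<noteq> 0"
  shows "eventually (\<lambda>k. (p \<in> L k \<inter> power_cell n (Y k) (V k) i) = (p \<in> K \<inter> power_cell n x v i)) sequentially"
proof -
  have gconv: "(\<lambda>k. gf (Y k) (V k) i j p) \<longlonglongrightarrow> gf x v i j p" if "j < n" for j
    unfolding gf_def using Y[OF i] Y[OF that] V[OF i] V[OF that] by (intro tendsto_intros)
  have Kc: "compact K" "convex K" "interior K \<noteq> {}" using K unfolding convex_body_def by auto
  then have Kne: "K \<noteq> {}" by auto
  have Lc: "compact (L k)" "convex (L k)" "L k \<noteq> {}" for k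
    using L[of k] unfolding convex_body_def by auto
  consider "p \<in> K \<inter> power_cell n x v i" | "p \<notin> K" | "p \<in> K" "p \<notin> power_cell n x v i" by blast
  then show ?thesis
  proof cases
    case 1
    then have "p \<in> interior K" using pf Kc(1)
      by (auto simp: frontier_def closure_closed compact_imp_closed)
    then obtain r where r: "0 < r" "ball p r \<subseteq> K" using mem_interior by blast
    have ev1: "eventually (\<lambda>k. hausdist K (L k) < r) sequentially"
      using H r(1) by (simp add: order_tendstoD(2))
    have neg: "gf x v i j p < 0" if "j \<in> {j. j < n \<and> j \<noteq> i}" for j
      using 1 that ph[of j] unfolding power_cell_gf by force
    have ev2: "eventually (\<lambda>k. \<forall>j\<in>{j. j < n \<and> j \<noteq> i}. gf (Y k) (V k) i j p < 0) sequentially"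
      by (rule eventually_ball_finite) (auto intro: order_tendstoD(2)[OF gconv neg])
    have "eventually (\<lambda>k. p \<in> L k \<inter> power_cell n (Y k) (V k) i) sequentially"
      using ev1 ev2
    proof eventually_elim
      case (elim k)
      have "p \<in> L k" using hd_sep[OF Lc(2) compact_imp_closed[OF Lc(1)] Lc(3) compact_imp_bounded[OF Kc(1)] r(1) r(2) elim(1)] .
      moreover have "p \<in> power_cell n (Y k) (V k) i"
        unfolding power_cell_gf
      proof (intro CollectI allI impI)
        fix j assume "j < n"
        then show "gf (Y k) (V k) i j p \<le> 0" using elim(2) by (cases "j = i") auto
      qed
      ultimately show ?case by auto
    qed
    then show ?thesis using 1 by (auto elim: eventually_mono)
  next
    case 2
    have d: "0 < infdist p K" using infdist_pos_not_in_closed[OF compact_imp_closed[OF Kc(1)] Kne 2] .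
    have "eventually (\<lambda>k. hausdist K (L k) < infdist p K) sequentially"
      using H d by (simp add: order_tendstoD(2))
    then have "eventually (\<lambda>k. p \<notin> L k) sequentially"
    proof (rule eventually_mono)
      fix k assume a: "hausdist K (L k) < infdist p K"
      show "p \<notin> L k"
      proof
        assume "p \<in> L k"
        from hd_ge2[OF compact_imp_bounded[OF Lc(1)] Kne this] a show False by linarith
      qed
    qed
    then show ?thesis using 2 by (auto elim: eventually_mono)
  next
    case 3
    then obtain j where j: "j < n" "0 < gf x v i j p" unfolding power_cell_gf by force
    have "eventually (\<lambda>k. 0 < gf (Y k) (V k) i j p) sequentially"
      using order_tendstoD(1)[OF gconv[OF j(1)] j(2)] .
    then have "eventually (\<lambda>k. p \<notin> power_cell n (Y k) (V k) i) sequentially"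
    proof (rule eventually_mono)
      fix k assume "0 < gf (Y k) (V k) i j p"
      then show "p \<notin> power_cell n (Y k) (V k) i" using j(1) unfolding power_cell_gf by auto
    qed
    then show ?thesis using 3 by (auto elim: eventually_mono)
  qed
qed

lemma sqdiff: "\<bar>(norm u)\<^sup>2 - (norm z)\<^sup>2\<bar> \<le> norm (u - z) * (norm u + norm z)"
proof -
  have "(norm u)\<^sup>2 - (norm z)\<^sup>2 = (norm u - norm z) * (norm u + norm z)" by (simp add: power2_eq_square algebra_simps)
  then have "\<bar>(norm u)\<^sup>2 - (norm z)\<^sup>2\<bar> = \<bar>norm u - norm z\<bar> * (norm u + norm z)" by (simp add: abs_mult)
  also have "\<dots> \<le> norm (u - z) * (norm u + norm z)"
    by (rule mult_right_mono) (simp_all add: norm_triangle_ineq3)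
  finally show ?thesis .
qed

lemma gf_unif:
  fixes x :: "nat \<Rightarrow> 'a::euclidean_space"
  assumes e: "0 < e"
  shows "\<exists>d>0. \<forall>y v. (\<forall>j<n. dist (x j) (y j) < d \<and> \<bar>w j - v j\<bar> < d) \<longrightarrow>
           (\<forall>i<n. \<forall>j<n. \<forall>p. norm p \<le> R \<longrightarrow> \<bar>gf y v i j p - gf x w i j p\<bar> < e)"
proof -
  define X where "X = (\<Sum>i<n. norm (x i))"
  have xb: "norm (x i) \<le> X" if "i < n" for i
    unfolding X_def using that by (intro member_le_sum) auto
  have X0: "0 \<le> X" unfolding X_def by (simp add: sum_nonneg)
  define C where "C = 4 * \<bar>R\<bar> + 4 * X + 4"
  have C0: "0 < C" using X0 by (simp add: C_def)
  define d where "d = min 1 (e / C)"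
  have d0: "0 < d" using e C0 by (simp add: d_def)
  have dC: "d * C \<le> e" using C0 by (simp add: d_def min_def field_simps)
  show ?thesis
  proof (intro exI[of _ d] conjI allI impI d0)
    fix y v i j and p :: 'a
    assume H: "\<forall>j<n. dist (x j) (y j) < d \<and> \<bar>w j - v j\<bar> < d" and i: "i < n" and j: "j < n" and p: "norm p \<le> R"
    define a where "a = y i - x i"
    define b where "b = y j - x j"
    have na: "norm a < d" using H i by (simp add: a_def dist_norm norm_minus_commute)
    have nb: "norm b < d" using H j by (simp add: b_def dist_norm norm_minus_commute)
    have wi: "\<bar>v i - w i\<bar> < d" using H i by (simp add: abs_minus_commute)
    have wj: "\<bar>v j - w j\<bar> < d" using H j by (simp add: abs_minus_commute)
    have eq: "gf y v i j p - gf x w i j p = 2 * inner p (b - a) + ((norm (y i))\<^sup>2 - (norm (x i))\<^sup>2)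
               - ((norm (y j))\<^sup>2 - (norm (x j))\<^sup>2) - (v i - w i) + (v j - w j)"
      unfolding gf_affine a_def b_def by (simp add: inner_diff_right algebra_simps)
    have t1: "\<bar>2 * inner p (b - a)\<bar> \<le> 2 * \<bar>R\<bar> * (norm a + norm b)"
    proof -
      have "\<bar>inner p (b - a)\<bar> \<le> norm p * norm (b - a)" by (rule Cauchy_Schwarz_ineq2)
      also have "\<dots> \<le> \<bar>R\<bar> * (norm a + norm b)"
        by (rule mult_mono) (use p norm_triangle_ineq4[of b a] in auto)
      finally show ?thesis by (simp add: abs_mult)
    qed
    have t2: "\<bar>(norm (y k))\<^sup>2 - (norm (x k))\<^sup>2\<bar> \<le> d * (2 * X + 1)" if k: "k < n" for k
    proof -
      have nk: "norm (y k - x k) < d" using H k by (simp add: dist_norm norm_minus_commute)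
      have "norm (y k) \<le> norm (x k) + norm (y k - x k)" using norm_triangle_ineq2[of "y k" "x k"] by simp
      then have "norm (y k) + norm (x k) \<le> 2 * X + 1" using xb[OF k] nk d0 unfolding d_def by auto
      moreover have "\<bar>(norm (y k))\<^sup>2 - (norm (x k))\<^sup>2\<bar> \<le> norm (y k - x k) * (norm (y k) + norm (x k))" by (rule sqdiff)
      ultimately show ?thesis using nk
        by (smt (verit, best) mult_mono norm_ge_zero)
    qed
    have "\<bar>gf y v i j p - gf x w i j p\<bar> \<le> 2 * \<bar>R\<bar> * (norm a + norm b) + d * (2 * X + 1) + d * (2 * X + 1) + \<bar>v i - w i\<bar> + \<bar>v j - w j\<bar>"
      unfolding eq using t1 t2[OF i] t2[OF j] by linarith
    also have "\<dots> < 2 * \<bar>R\<bar> * (2 * d) + d * (2 * X + 1) + d * (2 * X + 1) + d + d"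
    proof -
      have "2 * \<bar>R\<bar> * (norm a + norm b) \<le> 2 * \<bar>R\<bar> * (2 * d)" using na nb by (intro mult_left_mono) auto
      then show ?thesis using wi wj by linarith
    qed
    also have "\<dots> = d * C" by (simp add: C_def algebra_simps)
    finally show "\<bar>gf y v i j p - gf x w i j p\<bar> < e" using dC by linarith
  qed
qed

locale eqsetting =
  fixes \<mu> :: "'a::euclidean_space measure" and n :: nat
  assumes prob: "prob_space \<mu>"
    and borel_sets: "sets \<mu> = sets borel"
    and ac: "absolutely_continuous lborel \<mu>"
    and n_pos: "n \<ge> 1"
    and sf: "\<And>K x. convex_body K \<Longrightarrow> x \<in> conf_space n \<Longrightarrow> \<exists>!w. equipart_weights \<mu> n K x w"
begin

lemma fin: "finite_measure \<mu>"
  using prob by (simp add: prob_space_def)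

lemma space_mu: "space \<mu> = UNIV"
  using sets_eq_imp_space_eq[OF borel_sets] by simp

lemma closed_sets: "closed A \<Longrightarrow> A \<in> sets \<mu>"
  using borel_sets by (simp add: borel_closed)

lemma ew: "convex_body K \<Longrightarrow> x \<in> conf_space n \<Longrightarrow> equipart_weights \<mu> n K x (eq_weights \<mu> n K x)"
  unfolding eq_weights_def by (rule theI'[OF sf])

lemma ew_unique: "convex_body K \<Longrightarrow> x \<in> conf_space n \<Longrightarrow> equipart_weights \<mu> n K x w \<Longrightarrow> eq_weights \<mu> n K x = w"
  unfolding eq_weights_def by (rule the1_equality) (rule sf, auto)

lemma null_mu:
  assumes "negligible N" "closed N" shows "N \<in> null_sets \<mu>"
proof -
  have "N \<in> null_sets lebesgue" using assms(1) by (simp add: negligible_iff_null_sets)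
  moreover have "N \<in> sets lborel" using assms(2) by (simp add: borel_closed)
  ultimately have "N \<in> null_sets lborel" using null_sets_completion_iff by blast
  then show ?thesis using ac unfolding absolutely_continuous_def by auto
qed

lemma pos_interior:
  assumes "convex A" "closed A" "0 < measure \<mu> A" shows "interior A \<noteq> {}"
proof
  assume "interior A = {}"
  then have "negligible A" using assms(1) by (simp add: negligible_convex_interior)
  then have "A \<in> null_sets \<mu>" using null_mu assms(2) by auto
  from null_setsD1[OF this] have "measure \<mu> A = 0" by (simp add: measure_def)
  then show False using assms(3) by simp
qed


lemma meas0:
  assumes "closed K" "measure \<mu> K = 0" "closed C" shows "measure \<mu> (K \<inter> C) = 0"
proof -
  have "measure \<mu> (K \<inter> C) \<le> measure \<mu> K"
    by (rule finite_measure.finite_measure_mono[OF fin]) (auto intro: closed_sets assms)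
  then show ?thesis using assms(2) measure_nonneg[of \<mu> "K \<inter> C"] by linarith
qed

lemma mu_pos:
  assumes n2: "2 \<le> n" and K: "convex_body K" shows "0 < measure \<mu> K"
proof (rule ccontr)
  assume "\<not> 0 < measure \<mu> K"
  then have K0: "measure \<mu> K = 0" using measure_nonneg[of \<mu> K] by linarith
  have Kc: "compact K" "convex K" using K unfolding convex_body_def by auto
  obtain b :: 'a where b: "b \<in> Basis" using nonempty_Basis by blast
  then have b0: "b \<noteq> 0" by (auto simp: nonzero_Basis)
  define x where "x = (\<lambda>i::nat. real i *\<^sub>R b)"
  have xc: "x \<in> conf_space n" unfolding conf_space_def x_def using b0 by auto
  have xne: "x j \<noteq> x i" if "i \<noteq> j" for i j unfolding x_def using b0 that by auto
  define w where "w = eq_weights \<mu> n K x"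
  have E: "equipart_weights \<mu> n K x w" unfolding w_def by (rule ew[OF K xc])
  have "\<forall>i<n. \<exists>p. p \<in> interior (K \<inter> power_cell n x w i)"
    using E unfolding equipart_weights_def convex_body_def by auto
  then obtain P where P: "\<And>i. i < n \<Longrightarrow> P i \<in> interior (K \<inter> power_cell n x w i)" by metis
  have neg: "gf x w i j (P i) < 0" if "i < n" "j < n" "i \<noteq> j" for i j
    using int_strict[OF P[OF that(1)] that(2) xne[OF that(3)]] .
  define S where "S = {(i,j). i < n \<and> j < n \<and> i \<noteq> j}"
  have Sf: "finite S" by (rule finite_subset[of _ "{..<n} \<times> {..<n}"]) (auto simp: S_def)
  have S1: "(0,1) \<in> S" using n2 by (auto simp: S_def)
  define m where "m = Min ((\<lambda>(i,j). - gf x w i j (P i)) ` S)"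
  have m0: "0 < m" unfolding m_def
  proof (subst Min_gr_iff)
    show "finite ((\<lambda>(i,j). - gf x w i j (P i)) ` S)" using Sf by simp
    show "(\<lambda>(i,j). - gf x w i j (P i)) ` S \<noteq> {}" using S1 by blast
    show "\<forall>a\<in>(\<lambda>(i,j). - gf x w i j (P i)) ` S. 0 < a" using neg by (auto simp: S_def)
  qed
  have mle: "m \<le> - gf x w i j (P i)" if "i < n" "j < n" "i \<noteq> j" for i j
    unfolding m_def using Sf that by (intro Min_le) (auto simp: S_def image_iff intro!: bexI[of _ "(i,j)"])
  define t where "t = m / 4"
  have t0: "0 < t" using m0 by (simp add: t_def)
  define w' where "w' = (\<lambda>i. w i + (if i = 0 then t else 0) - (if i = 1 then t else 0))"
  have dw: "\<bar>w' k - w k\<bar> \<le> t" for k using t0 by (auto simp: w'_def)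
  have ws: "w \<in> weight_space n" using E unfolding equipart_weights_def by auto
  have E': "equipart_weights \<mu> n K x w'"
    unfolding equipart_weights_def
  proof (intro conjI allI impI)
    have "(\<Sum>i<n. w' i) = (\<Sum>i<n. w i) + (\<Sum>i<n. if i = 0 then t else 0) - (\<Sum>i<n. if i = 1 then t else 0)"
      unfolding w'_def by (simp add: sum.distrib sum_subtractf)
    also have "\<dots> = 0" using ws n2 by (simp add: weight_space_def)
    finally show "w' \<in> weight_space n" using ws n2 by (auto simp: weight_space_def w'_def)
  next
    fix i assume i: "i < n"
    have "P i \<in> interior K" using P[OF i] interior_mono[of "K \<inter> power_cell n x w i" K] by auto
    moreover have "gf x w' i j (P i) < 0" if "j < n" "j \<noteq> i" for j
    proof -
      have "gf x w' i j (P i) = gf x w i j (P i) - (w' i - w i) + (w' j - w j)" by (rule gf_wchange)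
      moreover have "m \<le> - gf x w i j (P i)" using mle[OF i that(1)] that(2) by auto
      moreover have "- t \<le> w' i - w i" "w' j - w j \<le> t" using dw[of i] dw[of j] by (auto simp: abs_le_iff)
      ultimately show ?thesis using t0 unfolding t_def by linarith
    qed
    ultimately have "P i \<in> interior (K \<inter> power_cell n x w' i)" by (rule int_cell)
    then show "convex_body (K \<inter> power_cell n x w' i)" unfolding convex_body_def
      using Kc by (auto intro!: compact_Int_closed closed_power_cell convex_Int convex_power_cell)
  next
    fix i j assume "i < n" "j < n"
    show "measure \<mu> (K \<inter> power_cell n x w' i) = measure \<mu> (K \<inter> power_cell n x w' j)"
      using meas0[OF compact_imp_closed[OF Kc(1)] K0 closed_power_cell] by simp
  qed
  have "w' = w" using ew_unique[OF K xc E'] ew_unique[OF K xc E] by simp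
  then have "w' 0 = w 0" by simp
  then show False using t0 by (simp add: w'_def)
qed

lemma w_bound:
  assumes L: "convex_body L" and y: "y \<in> conf_space n" and LR: "\<And>p. p \<in> L \<Longrightarrow> norm p \<le> R"
    and yb: "\<And>j. j < n \<Longrightarrow> norm (y j) \<le> Yb" and j: "j < n"
  shows "\<bar>eq_weights \<mu> n L y j\<bar> \<le> (R + Yb)\<^sup>2"
proof -
  define v where "v = eq_weights \<mu> n L y"
  have E: "equipart_weights \<mu> n L y v" unfolding v_def by (rule ew[OF L y])
  define M where "M = (R + Yb)\<^sup>2"
  have diff: "v a - v b \<le> M" if "a < n" "b < n" for a b
  proof -
    have "interior (L \<inter> power_cell n y v b) \<noteq> {}" using E that unfolding equipart_weights_def convex_body_def by auto
    then obtain p where p: "p \<in> L" "p \<in> power_cell n y v b" using interior_subset by blast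
    have "gf y v b a p \<le> 0" using p(2) that unfolding power_cell_gf by auto
    then have "v a - v b \<le> (norm (p - y a))\<^sup>2 - (norm (p - y b))\<^sup>2" unfolding gf_def by simp
    also have "\<dots> \<le> (norm (p - y a))\<^sup>2" by simp
    also have "\<dots> \<le> M" unfolding M_def
    proof (rule power_mono)
      show "norm (p - y a) \<le> R + Yb" using norm_triangle_ineq4[of p "y a"] LR[OF p(1)] yb[OF that(1)] by linarith
    qed simp
    finally show ?thesis .
  qed
  have ws: "(\<Sum>i<n. v i) = 0" using E unfolding equipart_weights_def weight_space_def by auto
  have eq: "(\<Sum>i<n. v j - v i) = real n * v j" using ws by (simp add: sum_subtractf)
  have "(\<Sum>i<n. v j - v i) \<le> (\<Sum>i<n. M)" by (rule sum_mono) (use diff j in auto)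
  then have up: "real n * v j \<le> real n * M" using eq by simp
  have "(\<Sum>i<n. - M) \<le> (\<Sum>i<n. v j - v i)" by (rule sum_mono) (use diff[of _ j] j in force)
  then have lo: "real n * (- M) \<le> real n * v j" using eq by simp
  have n0: "0 < real n" using n_pos by simp
  from up n0 have "v j \<le> M" by (meson mult_le_cancel_left_pos)
  moreover from lo n0 have "- M \<le> v j" by (meson mult_le_cancel_left_pos)
  ultimately have "v j \<le> M" "- M \<le> v j" by auto
  then show ?thesis unfolding v_def M_def by (simp add: abs_le_iff)
qed

lemma meas_conv:
  fixes K :: "'a set"
  assumes x: "x \<in> conf_space n" and K: "convex_body K" and i: "i < n"
    and Y: "\<And>j. j < n \<Longrightarrow> (\<lambda>k. Y k j) \<longlonglongrightarrow> x j"
    and V: "\<And>j. j < n \<Longrightarrow> (\<lambda>k. V k j) \<longlonglongrightarrow> v j"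
    and L: "\<And>k. convex_body (L k)"
    and H: "(\<lambda>k. hausdist K (L k)) \<longlonglongrightarrow> 0"
  shows "(\<lambda>k. measure \<mu> (L k \<inter> power_cell n (Y k) (V k) i)) \<longlonglongrightarrow> measure \<mu> (K \<inter> power_cell n x v i)"
proof -
  have Kc: "compact K" "convex K" using K unfolding convex_body_def by auto
  have Lc: "compact (L k)" for k using L[of k] unfolding convex_body_def by auto
  have xne: "x j \<noteq> x i" if "j < n" "j \<noteq> i" for j using x that i unfolding conf_space_def by auto
  have hyp: "{p. gf x v i j p = 0} \<in> null_sets \<mu>" if "j < n" "j \<noteq> i" for j
  proof (rule null_mu)
    have "{p. gf x v i j p = 0} = {p. inner (2 *\<^sub>R (x j - x i)) p = (norm (x j))\<^sup>2 - (norm (x i))\<^sup>2 + v i - v j}"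
      unfolding gf_affine by (auto simp: inner_commute algebra_simps)
    moreover have "2 *\<^sub>R (x j - x i) \<noteq> 0" using xne[OF that] by simp
    ultimately show "negligible {p. gf x v i j p = 0}" using negligible_hyperplane by metis
    show "closed {p. gf x v i j p = 0}" by (intro closed_Collect_eq continuous_intros)
  qed
  have fr: "frontier K \<in> null_sets \<mu>"
    by (rule null_mu) (auto simp: negligible_convex_frontier Kc)
  have AE1: "AE p in \<mu>. p \<notin> frontier K" by (rule AE_not_in[OF fr])
  have AE2: "AE p in \<mu>. \<forall>j\<in>{j. j < n \<and> j \<noteq> i}. p \<notin> {p. gf x v i j p = 0}"
  proof (rule AE_finite_allI)
    fix j assume "j \<in> {j. j < n \<and> j \<noteq> i}"
    then show "AE p in \<mu>. p \<notin> {p. gf x v i j p = 0}" using hyp[of j] by (intro AE_not_in) auto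
  qed simp
  have AEc: "AE p in \<mu>. (\<lambda>k. indicator (L k \<inter> power_cell n (Y k) (V k) i) p :: real) \<longlonglongrightarrow> indicator (K \<inter> power_cell n x v i) p"
    using AE1 AE2
  proof eventually_elim
    case (elim p)
    have "eventually (\<lambda>k. (p \<in> L k \<inter> power_cell n (Y k) (V k) i) = (p \<in> K \<inter> power_cell n x v i)) sequentially"
      by (rule ind_conv[OF x K i Y V L H elim(1)]) (use elim(2) in auto)
    then have "eventually (\<lambda>k. (indicator (L k \<inter> power_cell n (Y k) (V k) i) p :: real) = indicator (K \<inter> power_cell n x v i) p) sequentially"
      by (rule eventually_mono) (simp add: indicator_def)
    then show ?case by (rule tendsto_eventually)
  qed
  have "(\<lambda>k. integral\<^sup>L \<mu> (indicator (L k \<inter> power_cell n (Y k) (V k) i) :: 'a \<Rightarrow> real)) \<longlonglongrightarrow> integral\<^sup>L \<mu> (indicator (K \<inter> power_cell n x v i))"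
  proof (rule integral_dominated_convergence[where w="\<lambda>_. 1"])
    show "indicator (K \<inter> power_cell n x v i) \<in> borel_measurable \<mu>"
      by (intro borel_measurable_indicator closed_sets closed_Int compact_imp_closed Kc closed_power_cell)
    show "indicator (L k \<inter> power_cell n (Y k) (V k) i) \<in> borel_measurable \<mu>" for k
      by (intro borel_measurable_indicator closed_sets closed_Int compact_imp_closed Lc closed_power_cell)
    show "integrable \<mu> (\<lambda>_. 1::real)" by (rule finite_measure.integrable_const[OF fin])
    show "AE p in \<mu>. norm (indicator (L k \<inter> power_cell n (Y k) (V k) i) p :: real) \<le> 1" for k
      by (rule AE_I2) (simp add: indicator_def)
  qed (rule AEc)
  then show ?thesis by (simp add: space_mu)
qed


lemma wcont:
  assumes x: "x \<in> conf_space n" and K: "convex_body K" and e: "0 < e"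
  shows "\<exists>d>0. \<forall>y L. y \<in> conf_space n \<and> convex_body L \<and> (\<forall>i<n. dist (x i) (y i) < d) \<and> hausdist K L < d
           \<longrightarrow> (\<forall>j<n. \<bar>eq_weights \<mu> n L y j - eq_weights \<mu> n K x j\<bar> < e)"
proof (rule ccontr)
  assume neg: "\<not> ?thesis"
  define P where "P k y L \<longleftrightarrow> y \<in> conf_space n \<and> convex_body L \<and> (\<forall>i<n. dist (x i) (y i) < inverse (real (Suc k)))
      \<and> hausdist K L < inverse (real (Suc k)) \<and> (\<exists>j<n. e \<le> \<bar>eq_weights \<mu> n L y j - eq_weights \<mu> n K x j\<bar>)" for k y L
  have "\<exists>z. P k (fst z) (snd z)" for k
  proof -
    have "0 < inverse (real (Suc k))" by simp
    then have "\<not> (\<forall>y L. y \<in> conf_space n \<and> convex_body L \<and> (\<forall>i<n. dist (x i) (y i) < inverse (real (Suc k))) \<and> hausdist K L < inverse (real (Suc k))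
           \<longrightarrow> (\<forall>j<n. \<bar>eq_weights \<mu> n L y j - eq_weights \<mu> n K x j\<bar> < e))"
      using neg by blast
    then obtain y L where "P k y L" unfolding P_def by (auto simp: not_less)
    then show ?thesis by (intro exI[of _ "(y, L)"]) simp
  qed
  then obtain Z where Z: "\<And>k. P k (fst (Z k)) (snd (Z k))" by metis
  define Y where "Y k = fst (Z k)" for k
  define L where "L k = snd (Z k)" for k
  have YL: "\<And>k. Y k \<in> conf_space n" "\<And>k. convex_body (L k)"
    "\<And>k i. i < n \<Longrightarrow> dist (x i) (Y k i) < inverse (real (Suc k))"
    "\<And>k. hausdist K (L k) < inverse (real (Suc k))"
    "\<And>k. \<exists>j<n. e \<le> \<bar>eq_weights \<mu> n (L k) (Y k) j - eq_weights \<mu> n K x j\<bar>"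
    using Z unfolding P_def Y_def L_def by auto
  define w where "w = eq_weights \<mu> n K x"
  define V where "V k = eq_weights \<mu> n (L k) (Y k)" for k
  have Kc: "compact K" "convex K" "interior K \<noteq> {}" using K unfolding convex_body_def by auto
  then have Kne: "K \<noteq> {}" by auto
  have Lc: "compact (L k)" "L k \<noteq> {}" for k using YL(2)[of k] unfolding convex_body_def by auto
  obtain RK where RK: "\<And>p. p \<in> K \<Longrightarrow> norm p \<le> RK"
    using compact_imp_bounded[OF Kc(1)] unfolding bounded_iff by auto
  define X where "X = (\<Sum>i<n. norm (x i))"
  have xb: "norm (x i) \<le> X" if "i < n" for i
    unfolding X_def using that by (intro member_le_sum) auto
  have inv1: "inverse (real (Suc k)) \<le> 1" for k by (simp add: inverse_le_1_iff)
  have Lb: "norm p \<le> RK + 1" if pL: "p \<in> L k" for p k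
  proof -
    obtain q where q: "q \<in> K" "dist p q < inverse (real (Suc k))"
      using hd_close2[OF compact_imp_bounded[OF Lc(1)] Kne pL YL(4)] by auto
    have "norm p \<le> norm q + norm (p - q)" using norm_triangle_ineq2[of p q] by simp
    then show ?thesis using RK[OF q(1)] q(2) inv1[of k] by (simp add: dist_norm)
  qed
  have Yb: "norm (Y k i) \<le> X + 1" if "i < n" for k i
  proof -
    have "norm (Y k i) \<le> norm (x i) + norm (Y k i - x i)" using norm_triangle_ineq2[of "Y k i" "x i"] by simp
    then show ?thesis using xb[OF that] YL(3)[OF that, of k] inv1[of k] by (simp add: dist_norm norm_minus_commute)
  qed
  have Vb: "\<bar>V k j\<bar> \<le> (RK + 1 + (X + 1))\<^sup>2" if "j < n" for k j
    unfolding V_def by (rule w_bound[OF YL(2) YL(1) Lb Yb that])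
  obtain r l where rl: "strict_mono r" "\<forall>i<n. (\<lambda>k. V (r k) i) \<longlonglongrightarrow> l i"
    using subseq_conv[of n V, OF Vb] by blast
  define v where "v i = (if i < n then l i else 0)" for i
  have Yconv: "(\<lambda>k. Y k j) \<longlonglongrightarrow> x j" if "j < n" for j
  proof -
    have "(\<lambda>k. dist (Y k j) (x j)) \<longlonglongrightarrow> 0"
    proof (rule Lim_null_comparison[OF _ LIMSEQ_inverse_real_of_nat])
      show "\<forall>\<^sub>F k in sequentially. norm (dist (Y k j) (x j)) \<le> inverse (real (Suc k))"
        using YL(3)[OF that] by (intro always_eventually allI) (simp add: dist_commute less_imp_le)
    qed
    then show ?thesis by (rule tendsto_dist_iff[THEN iffD2])
  qed
  have Hconv: "(\<lambda>k. hausdist K (L k)) \<longlonglongrightarrow> 0"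
  proof (rule Lim_null_comparison[OF _ LIMSEQ_inverse_real_of_nat])
    obtain a where a: "a \<in> K" using Kne by auto
    have "0 \<le> hausdist K (L k)" for k
      using hd_ge1[OF compact_imp_bounded[OF Kc(1)] Lc(2)[of k] a] infdist_nonneg[of a "L k"] by linarith
    then show "\<forall>\<^sub>F k in sequentially. norm (hausdist K (L k)) \<le> inverse (real (Suc k))"
      using YL(4) by (intro always_eventually allI) (simp add: less_imp_le)
  qed
  have Yr: "(\<lambda>k. Y (r k) j) \<longlonglongrightarrow> x j" if "j < n" for j
    using LIMSEQ_subseq_LIMSEQ[OF Yconv[OF that] rl(1)] by (simp add: o_def)
  have Hr: "(\<lambda>k. hausdist K (L (r k))) \<longlonglongrightarrow> 0"
    using LIMSEQ_subseq_LIMSEQ[OF Hconv rl(1)] by (simp add: o_def)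
  have Vr: "(\<lambda>k. V (r k) j) \<longlonglongrightarrow> v j" if "j < n" for j
    using rl(2) that by (simp add: v_def)
  have MC: "(\<lambda>k. measure \<mu> (L (r k) \<inter> power_cell n (Y (r k)) (V (r k)) i)) \<longlonglongrightarrow> measure \<mu> (K \<inter> power_cell n x v i)"
    if "i < n" for i
    by (rule meas_conv[OF x K that, of "\<lambda>k. Y (r k)" "\<lambda>k. V (r k)" v "\<lambda>k. L (r k)"]) (use Yr Vr YL(2) Hr in auto)
  have EV: "equipart_weights \<mu> n (L k) (Y k) (V k)" for k
    unfolding V_def by (rule ew[OF YL(2) YL(1)])
  have meq: "measure \<mu> (K \<inter> power_cell n x v i) = measure \<mu> (K \<inter> power_cell n x v j)" if "i < n" "j < n" for i j
  proof -
    have eqk: "measure \<mu> (L (r k) \<inter> power_cell n (Y (r k)) (V (r k)) i) = measure \<mu> (L (r k) \<inter> power_cell n (Y (r k)) (V (r k)) j)" for k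
      using EV[of "r k"] that unfolding equipart_weights_def by blast
    have "(\<lambda>k. measure \<mu> (L (r k) \<inter> power_cell n (Y (r k)) (V (r k)) j)) \<longlonglongrightarrow> measure \<mu> (K \<inter> power_cell n x v i)"
      using MC[OF that(1)] unfolding eqk .
    from LIMSEQ_unique[OF this MC[OF that(2)]] show ?thesis .
  qed
  have vsum: "(\<Sum>j<n. v j) = 0"
  proof -
    have z: "(\<Sum>j<n. V (r k) j) = 0" for k
      using EV[of "r k"] unfolding equipart_weights_def weight_space_def by blast
    have "(\<lambda>k. \<Sum>j<n. V (r k) j) \<longlonglongrightarrow> (\<Sum>j<n. v j)" by (intro tendsto_sum) (use Vr in auto)
    then have "(\<lambda>k. 0::real) \<longlonglongrightarrow> (\<Sum>j<n. v j)" unfolding z .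
    from LIMSEQ_unique[OF tendsto_const this] show ?thesis by simp
  qed
  have Ev: "equipart_weights \<mu> n K x v"
    unfolding equipart_weights_def
  proof (intro conjI allI impI)
    have "\<forall>i\<ge>n. v i = 0" by (simp add: v_def)
    then show "v \<in> weight_space n" using vsum by (simp add: weight_space_def)
  next
    fix i j assume "i < n" "j < n"
    then show "measure \<mu> (K \<inter> power_cell n x v i) = measure \<mu> (K \<inter> power_cell n x v j)" by (rule meq)
  next
    fix i assume i: "i < n"
    show "convex_body (K \<inter> power_cell n x v i)"
    proof (cases "n = 1")
      case True
      then have "power_cell n x v i = UNIV" using i unfolding power_cell_def by auto
      then show ?thesis using K by simp
    next
      case False
      then have n2: "2 \<le> n" using n_pos by auto
      have cov: "(\<Union>j<n. K \<inter> power_cell n x v j) = K"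
        using cells_cover[OF n_pos, of K x v] by (rule sym)
      have "0 < measure \<mu> K" by (rule mu_pos[OF n2 K])
      also have "measure \<mu> K = measure \<mu> (\<Union>j<n. K \<inter> power_cell n x v j)" by (simp only: cov)
      also have "\<dots> \<le> (\<Sum>j<n. measure \<mu> (K \<inter> power_cell n x v j))"
      proof (rule finite_measure.finite_measure_subadditive_finite[OF fin])
        have "K \<inter> power_cell n x v j \<in> sets \<mu>" for j
          by (intro closed_sets closed_Int compact_imp_closed[OF Kc(1)] closed_power_cell)
        then show "(\<lambda>j. K \<inter> power_cell n x v j) ` {..<n} \<subseteq> sets \<mu>" by blast
      qed simp
      also have "\<dots> = (\<Sum>j<n. measure \<mu> (K \<inter> power_cell n x v i))"
      proof (rule sum.cong)
        fix j assume "j \<in> {..<n}"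
        then show "measure \<mu> (K \<inter> power_cell n x v j) = measure \<mu> (K \<inter> power_cell n x v i)"
          using meq[of j i] i by simp
      qed simp
      also have "\<dots> = real n * measure \<mu> (K \<inter> power_cell n x v i)" by simp
      finally have "0 < measure \<mu> (K \<inter> power_cell n x v i)"
        by (simp add: zero_less_mult_iff)
      then have "interior (K \<inter> power_cell n x v i) \<noteq> {}"
        by (rule pos_interior[OF convex_Int[OF Kc(2) convex_power_cell] closed_Int[OF compact_imp_closed[OF Kc(1)] closed_power_cell]])
      then show ?thesis unfolding convex_body_def
        using Kc by (auto intro!: compact_Int_closed closed_power_cell convex_Int convex_power_cell)
    qed
  qed
  have vw: "v = w" unfolding w_def using ew_unique[OF K x Ev] by simp
  have "(\<lambda>k. \<Sum>j<n. \<bar>V (r k) j - w j\<bar>) \<longlonglongrightarrow> (\<Sum>j<n. \<bar>v j - w j\<bar>)"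
    by (intro tendsto_sum tendsto_rabs tendsto_diff tendsto_const) (use Vr in auto)
  then have lim0: "(\<lambda>k. \<Sum>j<n. \<bar>V (r k) j - w j\<bar>) \<longlonglongrightarrow> 0" using vw by simp
  have "e \<le> (\<Sum>j<n. \<bar>V (r k) j - w j\<bar>)" for k
  proof -
    obtain j where j: "j < n" "e \<le> \<bar>V (r k) j - w j\<bar>" using YL(5)[of "r k"] unfolding V_def w_def by auto
    have "\<bar>V (r k) j - w j\<bar> \<le> (\<Sum>j<n. \<bar>V (r k) j - w j\<bar>)" using j(1) by (intro member_le_sum) auto
    then show ?thesis using j(2) by linarith
  qed
  then have "e \<le> 0" by (intro LIMSEQ_le_const[OF lim0]) auto
  then show False using e by simp
qed

lemma cellcont:
  assumes x: "x \<in> conf_space n" and K: "convex_body K" and i: "i < n" and \<epsilon>: "0 < \<epsilon>"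
  shows "\<exists>d>0. \<forall>y L. y \<in> conf_space n \<and> convex_body L \<and> (\<forall>j<n. dist (x j) (y j) < d) \<and> hausdist K L < d
           \<longrightarrow> hausdist (eq_cells \<mu> n x K i) (eq_cells \<mu> n y L i) < \<epsilon>"
proof -
  define w where "w = eq_weights \<mu> n K x"
  have E: "equipart_weights \<mu> n K x w" unfolding w_def by (rule ew[OF K x])
  define A where "A = K \<inter> power_cell n x w i"
  have Ab: "convex_body A" using E i unfolding equipart_weights_def A_def by auto
  have Kc: "compact K" "convex K" using K unfolding convex_body_def by auto
  have Ac: "compact A" "A \<noteq> {}" using Ab unfolding convex_body_def by auto
  obtain c where c: "c \<in> interior A" using Ab unfolding convex_body_def by auto
  have cK: "c \<in> interior K" using c interior_mono[of A K] unfolding A_def by auto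
  obtain \<rho> where \<rho>: "0 < \<rho>" "ball c \<rho> \<subseteq> K" using cK mem_interior by blast
  have cA: "c \<in> A" using c interior_subset by auto
  have xne: "x j \<noteq> x i" if "j < n" "j \<noteq> i" for j using x that i unfolding conf_space_def by auto
  have negc: "gf x w i j c < 0" if "j < n" "j \<noteq> i" for j
    using int_strict[OF c[unfolded A_def] that(1) xne[OF that]] .
  define m where "m = Min (insert 1 ((\<lambda>j. - gf x w i j c) ` {j. j < n \<and> j \<noteq> i}))"
  have m0: "0 < m" unfolding m_def using negc by (subst Min_gr_iff) auto
  have mle: "m \<le> - gf x w i j c" if "j < n" "j \<noteq> i" for j
    unfolding m_def using that by (intro Min_le) auto
  have gc: "gf x w i j c \<le> - m" if "j < n" "j \<noteq> i" for j using mle[OF that] by linarith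
  obtain RK where RK: "\<And>p. p \<in> K \<Longrightarrow> norm p \<le> RK"
    using compact_imp_bounded[OF Kc(1)] unfolding bounded_iff by auto
  have cK': "c \<in> K" using cA unfolding A_def by auto
  have RK0: "0 \<le> RK" using RK[OF cK'] norm_ge_zero[of c] by linarith
  define D where "D = 2 * RK + 1"
  have D0: "0 < D" using RK0 by (simp add: D_def)
  have Dd: "norm (a - b) \<le> D" if "a \<in> K" "b \<in> K" for a b
    using norm_triangle_ineq4[of a b] RK[OF that(1)] RK[OF that(2)] unfolding D_def by linarith
  define X where "X = (\<Sum>i<n. norm (x i))"
  have xb: "norm (x j) \<le> X" if "j < n" for j
    unfolding X_def using that by (intro member_le_sum) auto
  have X0: "0 \<le> X" unfolding X_def by (simp add: sum_nonneg)
  define \<Lambda> where "\<Lambda> = 4 * X + 1"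
  have \<Lambda>0: "0 < \<Lambda>" using X0 by (simp add: \<Lambda>_def)
  have lip: "gf x w i j p \<le> gf x w i j q + \<Lambda> * norm (p - q)" if "j < n" for j p q
  proof -
    have "norm (x j - x i) \<le> 2 * X" using norm_triangle_ineq4[of "x j" "x i"] xb[OF that] xb[OF i] by linarith
    then have "2 * norm (x j - x i) * norm (p - q) \<le> \<Lambda> * norm (p - q)"
      unfolding \<Lambda>_def by (intro mult_right_mono) auto
    then show ?thesis using gf_lip[of x w i j p q] by linarith
  qed
  define t where "t = min 1 (\<epsilon> / (2 * D))"
  have t0: "0 < t" "t \<le> 1" using \<epsilon> D0 by (auto simp: t_def)
  have tD: "t * D \<le> \<epsilon> / 2" using D0 by (simp add: t_def min_def field_simps)
  define e3 where "e3 = min (t * m) (\<epsilon> * m / (4 * D))"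
  have e30: "0 < e3" using t0 m0 \<epsilon> D0 by (simp add: e3_def)
  obtain d3 where d3: "0 < d3" "\<forall>y v. (\<forall>j<n. dist (x j) (y j) < d3 \<and> \<bar>w j - v j\<bar> < d3) \<longrightarrow>
           (\<forall>i<n. \<forall>j<n. \<forall>p. norm p \<le> RK + 1 \<longrightarrow> \<bar>gf y v i j p - gf x w i j p\<bar> < e3)"
    using gf_unif[OF e30, of n x w "RK + 1"] by blast
  obtain dw where dw: "0 < dw" "\<forall>y L. y \<in> conf_space n \<and> convex_body L \<and> (\<forall>i<n. dist (x i) (y i) < dw) \<and> hausdist K L < dw
           \<longrightarrow> (\<forall>j<n. \<bar>eq_weights \<mu> n L y j - eq_weights \<mu> n K x j\<bar> < d3)"
    using wcont[OF x K d3(1)] by blast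
  define \<delta> where "\<delta> = min (min 1 (t * \<rho>)) (min (\<epsilon> / 4) (min (\<epsilon> * m / (4 * D * \<Lambda>)) (min d3 dw)))"
  have \<delta>0: "0 < \<delta>" using t0 \<rho> \<epsilon> m0 D0 \<Lambda>0 d3 dw by (simp add: \<delta>_def)
  have \<delta>le: "\<delta> \<le> 1" "\<delta> \<le> t * \<rho>" "\<delta> \<le> \<epsilon> / 4" "\<delta> \<le> \<epsilon> * m / (4 * D * \<Lambda>)" "\<delta> \<le> d3" "\<delta> \<le> dw"
    by (simp_all add: \<delta>_def)
  show ?thesis
  proof (intro exI[of _ \<delta>] conjI allI impI \<delta>0)
    fix y L
    assume H: "y \<in> conf_space n \<and> convex_body L \<and> (\<forall>j<n. dist (x j) (y j) < \<delta>) \<and> hausdist K L < \<delta>"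
    then have y: "y \<in> conf_space n" and L: "convex_body L" and yd: "\<And>j. j < n \<Longrightarrow> dist (x j) (y j) < \<delta>"
      and hKL: "hausdist K L < \<delta>" by auto
    define v where "v = eq_weights \<mu> n L y"
    have E': "equipart_weights \<mu> n L y v" unfolding v_def by (rule ew[OF L y])
    define B where "B = L \<inter> power_cell n y v i"
    have Bb: "convex_body B" using E' i unfolding equipart_weights_def B_def by auto
    have Bc: "compact B" "B \<noteq> {}" using Bb unfolding convex_body_def by auto
    have Lc: "compact L" "convex L" "L \<noteq> {}" using L unfolding convex_body_def by auto
    have vclose: "\<bar>w j - v j\<bar> < d3" if "j < n" for j
      using dw(2) y L yd hKL \<delta>le that unfolding v_def w_def
      by (smt (verit, ccfv_SIG))
    have dev: "\<bar>gf y v i j p - gf x w i j p\<bar> < e3" if "j < n" "norm p \<le> RK + 1" for j p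
      using d3(2) yd \<delta>le(5) vclose i that by (smt (verit, ccfv_SIG))
    have Kne: "K \<noteq> {}" using cA unfolding A_def by auto
    have part_b: "infdist a B \<le> 3 * \<epsilon> / 4" if aA: "a \<in> A" for a
    proof -
      have aK: "a \<in> K" using aA unfolding A_def by auto
      define q where "q = (1 - t) *\<^sub>R a + t *\<^sub>R c"
      have ballq: "ball q (t * \<rho>) \<subseteq> K"
      proof
        fix z assume z: "z \<in> ball q (t * \<rho>)"
        define c' where "c' = c + (1 / t) *\<^sub>R (z - q)"
        have "dist c c' = norm (z - q) / t" using t0 by (simp add: c'_def dist_norm)
        also have "\<dots> < \<rho>" using z t0 by (simp add: dist_norm norm_minus_commute field_simps)
        finally have "c' \<in> K" using \<rho>(2) by auto
        moreover have "z = (1 - t) *\<^sub>R a + t *\<^sub>R c'"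
          using t0 by (simp add: c'_def q_def algebra_simps)
        ultimately show "z \<in> K" using convexD[OF Kc(2) aK, of c' "1 - t" t] t0 by simp
      qed
      have qL: "q \<in> L"
        by (rule hd_sep[OF Lc(2) compact_imp_closed[OF Lc(1)] Lc(3) compact_imp_bounded[OF Kc(1)] _ ballq])
           (use t0 \<rho> hKL \<delta>le in auto)
      have qK: "q \<in> K" using ballq t0 \<rho> by (auto intro: subsetD[OF ballq])
      have nq: "norm q \<le> RK + 1" using RK[OF qK] by simp
      have "gf y v i j q \<le> 0" if j: "j < n" for j
      proof (cases "j = i")
        case True then show ?thesis by simp
      next
        case False
        have ga: "gf x w i j a \<le> 0" using aA j unfolding A_def power_cell_gf by auto
        have "gf x w i j q = (1 - t) * gf x w i j a + t * gf x w i j c" unfolding q_def by (rule gf_comb)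
        also have "\<dots> \<le> t * (- m)"
        proof -
          have "(1 - t) * gf x w i j a \<le> 0" using ga t0 by (simp add: mult_nonneg_nonpos)
          moreover have "t * gf x w i j c \<le> t * (- m)" using gc[OF j False] t0 by (intro mult_left_mono) auto
          ultimately show ?thesis by linarith
        qed
        finally have "gf x w i j q \<le> - (t * m)" by simp
        moreover have "e3 \<le> t * m" by (simp add: e3_def)
        ultimately show ?thesis using dev[OF j nq] by linarith
      qed
      then have qB: "q \<in> B" using qL unfolding B_def power_cell_gf by auto
      have "infdist a B \<le> dist a q" by (rule infdist_le[OF qB])
      also have "dist a q = t * norm (a - c)"
      proof -
        have "a - q = t *\<^sub>R (a - c)" unfolding q_def by (simp add: algebra_simps)
        then show ?thesis using t0 by (simp add: dist_norm)
      qed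
      also have "\<dots> \<le> t * D" using Dd[OF aK] cA t0 unfolding A_def by (intro mult_left_mono) auto
      also have "\<dots> \<le> 3 * \<epsilon> / 4" using tD \<epsilon> by linarith
      finally show ?thesis .
    qed
    have part_a: "infdist b A \<le> 3 * \<epsilon> / 4" if bB: "b \<in> B" for b
    proof -
      have bL: "b \<in> L" using bB unfolding B_def by auto
      obtain k where k: "k \<in> K" "dist b k < \<delta>"
        using hd_close2[OF compact_imp_bounded[OF Lc(1)] Kne bL hKL] by auto
      have nb: "norm b \<le> RK + 1"
      proof -
        have "norm b \<le> norm k + norm (b - k)" using norm_triangle_ineq2[of b k] by simp
        then show ?thesis using RK[OF k(1)] k(2) \<delta>le(1) by (simp add: dist_norm)
      qed
      define \<eta> where "\<eta> = e3 + \<Lambda> * \<delta>"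
      have "0 < \<Lambda> * \<delta>" using \<Lambda>0 \<delta>0 by simp
      then have \<eta>0: "0 < \<eta>" using e30 unfolding \<eta>_def by linarith
      have gk: "gf x w i j k \<le> \<eta>" if j: "j < n" for j
      proof -
        have "gf x w i j b \<le> gf y v i j b + e3" using dev[OF j nb] by linarith
        moreover have "gf y v i j b \<le> 0" using bB j unfolding B_def power_cell_gf by auto
        moreover have "gf x w i j k \<le> gf x w i j b + \<Lambda> * norm (k - b)" by (rule lip[OF j])
        moreover have "\<Lambda> * norm (k - b) \<le> \<Lambda> * \<delta>" using k(2) \<Lambda>0
          by (intro mult_left_mono) (auto simp: dist_norm norm_minus_commute)
        ultimately show ?thesis unfolding \<eta>_def by linarith
      qed
      define s where "s = \<eta> / (m + \<eta>)"
      have s0: "0 \<le> s" "s \<le> 1" using \<eta>0 m0 by (auto simp: s_def field_simps)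
      have sm: "s * (m + \<eta>) = \<eta>" using \<eta>0 m0 by (simp add: s_def field_simps)
      define q where "q = (1 - s) *\<^sub>R k + s *\<^sub>R c"
      have qK: "q \<in> K" unfolding q_def
        using convexD[OF Kc(2) k(1), of c "1 - s" s] cA s0 unfolding A_def by auto
      have "gf x w i j q \<le> 0" if j: "j < n" for j
      proof (cases "j = i")
        case True then show ?thesis by simp
      next
        case False
        have "gf x w i j q = (1 - s) * gf x w i j k + s * gf x w i j c" unfolding q_def by (rule gf_comb)
        also have "\<dots> \<le> (1 - s) * \<eta> + s * (- m)"
        proof -
          have "(1 - s) * gf x w i j k \<le> (1 - s) * \<eta>" using gk[OF j] s0 by (intro mult_left_mono) auto
          moreover have "s * gf x w i j c \<le> s * (- m)" using gc[OF j False] s0 by (intro mult_left_mono) auto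
          ultimately show ?thesis by linarith
        qed
        also have "\<dots> = 0" using sm by (simp add: algebra_simps)
        finally show ?thesis .
      qed
      then have qA: "q \<in> A" using qK unfolding A_def power_cell_gf by auto
      have "infdist b A \<le> dist b q" by (rule infdist_le[OF qA])
      also have "\<dots> \<le> dist b k + dist k q" by (rule dist_triangle)
      also have "dist k q = s * norm (k - c)"
      proof -
        have "k - q = s *\<^sub>R (k - c)" unfolding q_def by (simp add: algebra_simps)
        then show ?thesis using s0 by (simp add: dist_norm)
      qed
      also have "s * norm (k - c) \<le> s * D" using Dd[OF k(1)] cA s0 unfolding A_def by (intro mult_left_mono) auto
      also have "s * D \<le> \<epsilon> / 2"
      proof -
        have "\<Lambda> * \<delta> \<le> \<Lambda> * (\<epsilon> * m / (4 * D * \<Lambda>))"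
          using \<delta>le(4) \<Lambda>0 by (intro mult_left_mono) auto
        also have "\<dots> = \<epsilon> * m / (4 * D)" using \<Lambda>0 D0 by (simp add: field_simps)
        finally have "\<Lambda> * \<delta> \<le> \<epsilon> * m / (4 * D)" .
        moreover have "e3 \<le> \<epsilon> * m / (4 * D)" by (simp add: e3_def)
        ultimately have "\<eta> \<le> \<epsilon> * m / (2 * D)" unfolding \<eta>_def by (simp add: field_simps)
        then have eta2: "2 * D * \<eta> \<le> \<epsilon> * m" using D0 by (simp add: field_simps)
        have "s \<le> \<eta> / m" unfolding s_def using \<eta>0 m0 by (intro divide_left_mono) auto
        then have sm': "s * m \<le> \<eta>" using m0 by (simp add: field_simps)
        have "(s * D) * m = (D / 2) * (2 * (s * m))" by (simp add: algebra_simps)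
        also have "\<dots> \<le> (D / 2) * (2 * \<eta>)" using sm' D0 by (intro mult_left_mono) auto
        also have "\<dots> = (2 * D * \<eta>) / 2" by (simp add: algebra_simps)
        also have "\<dots> \<le> (\<epsilon> * m) / 2" using eta2 by simp
        also have "\<dots> = (\<epsilon> / 2) * m" by simp
        finally show ?thesis using m0 by (simp only: mult_le_cancel_right_pos)
      qed
      finally show ?thesis using k(2) \<delta>le(3) by linarith
    qed
    have "hausdist A B \<le> 3 * \<epsilon> / 4"
      by (rule hd_le[OF Ac(2) Bc(2)]) (use part_b part_a in auto)
    then show "hausdist (eq_cells \<mu> n x K i) (eq_cells \<mu> n y L i) < \<epsilon>"
      using \<epsilon> unfolding eq_cells_def A_def B_def w_def v_def by linarith
  qed
qed

end


theorem theorem6p6: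
  fixes \<mu> :: "'a::euclidean_space measure" and n :: nat
  assumes prob: "prob_space \<mu>"
    and borel_sets: "sets \<mu> = sets borel"
    and ac: "absolutely_continuous lborel \<mu>"
    and n_pos: "n \<ge> 1"
    and standing_fact: "\<And>K x. convex_body K \<Longrightarrow> x \<in> conf_space n \<Longrightarrow>
                          \<exists>!w. equipart_weights \<mu> n K x w"
  shows
    \<comment> \<open>continuity (sup of the component metrics as product metric)\<close>
    "(\<forall>x K. x \<in> conf_space n \<and> convex_body K \<longrightarrow>
        (\<forall>\<epsilon>>0. \<exists>\<delta>>0. \<forall>y L. y \<in> conf_space n \<and> convex_body L
            \<and> (\<forall>i<n. dist (x i) (y i) < \<delta>) \<and> hausdist K L < \<delta> \<longrightarrow>
            (\<forall>i<n. hausdist (eq_cells \<mu> n x K i) (eq_cells \<mu> n y L i) < \<epsilon>)))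
     \<and> (\<forall>\<sigma> x K. \<sigma> permutes {..<n} \<and> x \<in> conf_space n \<and> convex_body K \<longrightarrow>
          (\<forall>i<n. eq_cells \<mu> n (perm_act \<sigma> x) K i = perm_act \<sigma> (eq_cells \<mu> n x K) i))
     \<and> (\<forall>x K. x \<in> conf_space n \<and> convex_body K \<longrightarrow>
          (\<forall>i<n. convex_body (eq_cells \<mu> n x K i)) \<and> eq_cells \<mu> n x K \<in> EMP \<mu> K n)"
proof -
  interpret eqsetting \<mu> n by (rule eqsetting.intro[OF prob borel_sets ac n_pos standing_fact])
  have P1: "\<forall>x K. x \<in> conf_space n \<and> convex_body K \<longrightarrow>
        (\<forall>\<epsilon>>0. \<exists>\<delta>>0. \<forall>y L. y \<in> conf_space n \<and> convex_body L
            \<and> (\<forall>i<n. dist (x i) (y i) < \<delta>) \<and> hausdist K L < \<delta> \<longrightarrow>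
            (\<forall>i<n. hausdist (eq_cells \<mu> n x K i) (eq_cells \<mu> n y L i) < \<epsilon>))"
  proof (intro allI impI)
    fix x :: "nat \<Rightarrow> 'a" and K :: "'a set" and \<epsilon> :: real assume xK: "x \<in> conf_space n \<and> convex_body K" and \<epsilon>: "(0::real) < \<epsilon>"
    then have x: "x \<in> conf_space n" and K: "convex_body K" by auto
    define Q where "Q i d \<longleftrightarrow> 0 < d \<and> (\<forall>y L. y \<in> conf_space n \<and> convex_body L \<and> (\<forall>j<n. dist (x j) (y j) < d) \<and> hausdist K L < d
           \<longrightarrow> hausdist (eq_cells \<mu> n x K i) (eq_cells \<mu> n y L i) < \<epsilon>)" for i d
    have "\<forall>i\<in>{..<n}. \<exists>d. Q i d"
    proof
      fix i assume "i \<in> {..<n}"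
      then have "i < n" by simp
      from cellcont[OF x K this \<epsilon>] show "\<exists>d. Q i d" unfolding Q_def .
    qed
    from bchoice[OF this] obtain d where d: "\<forall>i\<in>{..<n}. Q i (d i)" by blast
    define \<delta> where "\<delta> = Min (d ` {..<n})"
    have "0 \<in> {..<n}" using n_pos by simp
    then have ne: "d ` {..<n} \<noteq> {}" by blast
    have \<delta>0: "0 < \<delta>" unfolding \<delta>_def using d ne by (subst Min_gr_iff) (auto simp: Q_def)
    have \<delta>le: "\<delta> \<le> d i" if "i < n" for i unfolding \<delta>_def using that by (intro Min_le) auto
    show "\<exists>\<delta>>0. \<forall>y L. y \<in> conf_space n \<and> convex_body L
            \<and> (\<forall>i<n. dist (x i) (y i) < \<delta>) \<and> hausdist K L < \<delta> \<longrightarrow>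
            (\<forall>i<n. hausdist (eq_cells \<mu> n x K i) (eq_cells \<mu> n y L i) < \<epsilon>)"
    proof (intro exI[of _ \<delta>] conjI allI impI \<delta>0)
      fix y L i
      assume H: "y \<in> conf_space n \<and> convex_body L \<and> (\<forall>i<n. dist (x i) (y i) < \<delta>) \<and> hausdist K L < \<delta>"
        and i: "i < n"
      have Qi: "Q i (d i)" using d i by auto
      have d1: "\<forall>j<n. dist (x j) (y j) < d i"
      proof (intro allI impI)
        fix j assume "j < n"
        then have "dist (x j) (y j) < \<delta>" using H by blast
        then show "dist (x j) (y j) < d i" using \<delta>le[OF i] by linarith
      qed
      have d2: "hausdist K L < d i" using H \<delta>le[OF i] by linarith
      have imp: "\<forall>y L. y \<in> conf_space n \<and> convex_body L \<and> (\<forall>j<n. dist (x j) (y j) < d i) \<and> hausdist K L < d i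
           \<longrightarrow> hausdist (eq_cells \<mu> n x K i) (eq_cells \<mu> n y L i) < \<epsilon>"
        using Qi unfolding Q_def by (rule conjunct2)
      have yL: "y \<in> conf_space n" "convex_body L" using H by auto
      show "hausdist (eq_cells \<mu> n x K i) (eq_cells \<mu> n y L i) < \<epsilon>"
        using imp yL d1 d2 by simp
    qed
  qed
  have P2: "\<forall>\<sigma> x K. \<sigma> permutes {..<n} \<and> x \<in> conf_space n \<and> convex_body K \<longrightarrow>
          (\<forall>i<n. eq_cells \<mu> n (perm_act \<sigma> x) K i = perm_act \<sigma> (eq_cells \<mu> n x K) i)"
  proof (intro allI impI)
    fix \<sigma> :: "nat \<Rightarrow> nat" and x :: "nat \<Rightarrow> 'a" and K :: "'a set" and i :: nat
    assume H: "\<sigma> permutes {..<n} \<and> x \<in> conf_space n \<and> convex_body K" and i: "i < n"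
    then have \<sigma>: "\<sigma> permutes {..<n}" and x: "x \<in> conf_space n" and K: "convex_body K" by auto
    define \<tau> where "\<tau> = inv \<sigma>"
    have h\<tau>: "\<tau> permutes {..<n}" unfolding \<tau>_def by (rule permutes_inv[OF \<sigma>])
    have \<tau>lt: "\<tau> j < n \<longleftrightarrow> j < n" for j using permutes_in_image[OF h\<tau>, of j] by simp
    have \<tau>fix: "\<tau> j = j" if "\<not> j < n" for j using permutes_not_in[OF h\<tau>, of j] that by simp
    have \<tau>inj: "inj \<tau>" by (rule permutes_inj[OF h\<tau>])
    have \<tau>img: "\<tau> ` {..<n} = {..<n}" by (rule permutes_image[OF h\<tau>])
    have allq: "(\<forall>j<n. P (\<tau> j)) \<longleftrightarrow> (\<forall>j<n. P j)" for P
    proof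
      assume a: "\<forall>j<n. P (\<tau> j)"
      show "\<forall>j<n. P j"
      proof (intro allI impI)
        fix j assume "j < n"
        then have "j \<in> \<tau> ` {..<n}" using \<tau>img by simp
        then obtain k where "k \<in> {..<n}" "j = \<tau> k" by blast
        then show "P j" using a by simp
      qed
    next
      assume "\<forall>j<n. P j" then show "\<forall>j<n. P (\<tau> j)" using \<tau>lt by auto
    qed
    define w where "w = eq_weights \<mu> n K x"
    have E: "equipart_weights \<mu> n K x w" unfolding w_def by (rule ew[OF K x])
    define x' where "x' = perm_act \<sigma> x"
    define w' where "w' = perm_act \<sigma> w"
    have x'e: "x' j = x (\<tau> j)" for j unfolding x'_def perm_act_def \<tau>_def by simp
    have w'e: "w' j = w (\<tau> j)" for j unfolding w'_def perm_act_def \<tau>_def by simp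
    have cellq: "power_cell n x' w' k = power_cell n x w (\<tau> k)" for k
    proof -
      have "p \<in> power_cell n x' w' k \<longleftrightarrow> p \<in> power_cell n x w (\<tau> k)" for p
      proof -
        have "p \<in> power_cell n x' w' k \<longleftrightarrow> (\<forall>j<n. (\<lambda>j. (norm (p - x (\<tau> k)))\<^sup>2 - w (\<tau> k) \<le> (norm (p - x j))\<^sup>2 - w j) (\<tau> j))"
          unfolding power_cell_def x'e w'e by simp
        also have "\<dots> \<longleftrightarrow> (\<forall>j<n. (norm (p - x (\<tau> k)))\<^sup>2 - w (\<tau> k) \<le> (norm (p - x j))\<^sup>2 - w j)"
          by (rule allq)
        also have "\<dots> \<longleftrightarrow> p \<in> power_cell n x w (\<tau> k)" unfolding power_cell_def by simp
        finally show ?thesis .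
      qed
      then show ?thesis by blast
    qed
    have x'c: "x' \<in> conf_space n"
      unfolding conf_space_def
    proof (intro CollectI allI impI)
      fix a b assume ab: "a < n" "b < n" "a \<noteq> b"
      have "\<tau> a \<noteq> \<tau> b" using \<tau>inj ab(3) by (auto dest: injD)
      then show "x' a \<noteq> x' b" using x \<tau>lt ab unfolding conf_space_def x'e by auto
    qed
    have ws: "w \<in> weight_space n" using E unfolding equipart_weights_def by blast
    have E': "equipart_weights \<mu> n K x' w'"
      unfolding equipart_weights_def
    proof (intro conjI allI impI)
      have "(\<Sum>j<n. w' j) = (\<Sum>j<n. w (\<tau> j))" by (simp add: w'e)
      also have "\<dots> = (\<Sum>j<n. w j)" by (rule sum.reindex_bij_betw[OF permutes_imp_bij[OF h\<tau>]])
      finally have "(\<Sum>j<n. w' j) = 0" using ws by (simp add: weight_space_def)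
      moreover have "\<forall>j\<ge>n. w' j = 0" using ws \<tau>fix by (simp add: weight_space_def w'e)
      ultimately show "w' \<in> weight_space n" by (simp add: weight_space_def)
    next
      fix k assume "k < n"
      then have "\<tau> k < n" using \<tau>lt by simp
      then show "convex_body (K \<inter> power_cell n x' w' k)" using E unfolding equipart_weights_def cellq by blast
    next
      fix a b assume "a < n" "b < n"
      then have "\<tau> a < n" "\<tau> b < n" using \<tau>lt by auto
      then show "measure \<mu> (K \<inter> power_cell n x' w' a) = measure \<mu> (K \<inter> power_cell n x' w' b)"
        using E unfolding equipart_weights_def cellq by blast
    qed
    have "eq_weights \<mu> n K x' = w'" by (rule ew_unique[OF K x'c E'])
    then have "eq_cells \<mu> n x' K i = K \<inter> power_cell n x w (\<tau> i)" unfolding eq_cells_def by (simp add: cellq)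
    also have "\<dots> = perm_act \<sigma> (eq_cells \<mu> n x K) i" unfolding perm_act_def eq_cells_def w_def \<tau>_def by simp
    finally show "eq_cells \<mu> n (perm_act \<sigma> x) K i = perm_act \<sigma> (eq_cells \<mu> n x K) i" unfolding x'_def .
  qed
  have P3: "\<forall>x K. x \<in> conf_space n \<and> convex_body K \<longrightarrow>
          (\<forall>i<n. convex_body (eq_cells \<mu> n x K i)) \<and> eq_cells \<mu> n x K \<in> EMP \<mu> K n"
  proof (intro allI impI)
    fix x :: "nat \<Rightarrow> 'a" and K :: "'a set" assume "x \<in> conf_space n \<and> convex_body K"
    then have x: "x \<in> conf_space n" and K: "convex_body K" by auto
    have E: "equipart_weights \<mu> n K x (eq_weights \<mu> n K x)" by (rule ew[OF K x])
    have cb: "\<forall>i<n. convex_body (eq_cells \<mu> n x K i)" using E unfolding equipart_weights_def eq_cells_def by blast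
    have "eq_cells \<mu> n x K \<in> EMP \<mu> K n"
      unfolding EMP_def
    proof (intro CollectI conjI)
      show "\<forall>i<n. convex_body (eq_cells \<mu> n x K i)" by (rule cb)
      show "K = (\<Union>i<n. eq_cells \<mu> n x K i)" unfolding eq_cells_def by (rule cells_cover[OF n_pos])
      show "\<forall>i<n. \<forall>j<n. i \<noteq> j \<longrightarrow> interior (eq_cells \<mu> n x K i) \<inter> interior (eq_cells \<mu> n x K j) = {}"
        unfolding eq_cells_def by (intro allI impI cells_disj[OF x])
      show "\<forall>i<n. \<forall>j<n. measure \<mu> (eq_cells \<mu> n x K i) = measure \<mu> (eq_cells \<mu> n x K j)"
        using E unfolding equipart_weights_def eq_cells_def by blast
    qed
    with cb show "(\<forall>i<n. convex_body (eq_cells \<mu> n x K i)) \<and> eq_cells \<mu> n x K \<in> EMP \<mu> K n" by blast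
  qed
  show ?thesis by (rule conjI[OF P1 conjI[OF P2 P3]])
qed

end
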